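(* Let $G$ be a nice connected graph of order $n$, maximum degree $\Delta$ and chromatic number $k$, and let $W$ be a closed walk of $G$ of length $p$ going through all vertices of $G$. Then ${\rm ML}^{\rm W}(G) \leq p + (n-1)(2k-2)+2\Delta$.
   Context: All graphs are finite and simple. A walk of a graph $G$ is a sequence of vertices $u_0u_1\dots u_p$ with $u_tu_{t+1}\in E(G)$ for all $t$ (vertices and edges may repeat); its length is $p$; it is closed if $u_0=u_p$. For a walk $W$ of $G$, $G+W$ is the multigraph on $V(G)$ whose edge multiset consists of $E(G)$ together with each edge added as many times as $W$ traverses it. A multigraph is locally irregular if no two adjacent vertices have the same degree; a walk is irregularising if $G+W$ is locally irregular. A graph is nice if it is connected and not isomorphic to $K_2$. ${\rm ML}^{\rm W}(G)$ denotes the minimum length of an irregularising walk of $G$ (a walk of length $0$ is allowed). *)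

theory Defs
  imports Main
begin

definition simple_graph :: "'a set \<Rightarrow> ('a \<Rightarrow> 'a \<Rightarrow> bool) \<Rightarrow> bool" where
  "simple_graph V E \<longleftrightarrow> finite V \<and> (\<forall>u v. E u v \<longrightarrow> u \<in> V \<and> v \<in> V)
     \<and> (\<forall>u v. E u v \<longrightarrow> E v u) \<and> (\<forall>v. \<not> E v v)"

definition connected_graph :: "'a set \<Rightarrow> ('a \<Rightarrow> 'a \<Rightarrow> bool) \<Rightarrow> bool" where
  "connected_graph V E \<longleftrightarrow> V \<noteq> {} \<and> (\<forall>u\<in>V. \<forall>v\<in>V. E\<^sup>*\<^sup>* u v)"

definition is_K2 :: "'a set \<Rightarrow> ('a \<Rightarrow> 'a \<Rightarrow> bool) \<Rightarrow> bool" where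
  "is_K2 V E \<longleftrightarrow> (\<exists>a b. a \<noteq> b \<and> V = {a, b} \<and> E a b)"

definition nice :: "'a set \<Rightarrow> ('a \<Rightarrow> 'a \<Rightarrow> bool) \<Rightarrow> bool" where
  "nice V E \<longleftrightarrow> connected_graph V E \<and> \<not> is_K2 V E"

definition degree :: "'a set \<Rightarrow> ('a \<Rightarrow> 'a \<Rightarrow> bool) \<Rightarrow> 'a \<Rightarrow> nat" where
  "degree V E v = card {u \<in> V. E v u}"

definition max_degree :: "'a set \<Rightarrow> ('a \<Rightarrow> 'a \<Rightarrow> bool) \<Rightarrow> nat" where
  "max_degree V E = Max (degree V E ` V)"

definition proper_colouring :: "'a set \<Rightarrow> ('a \<Rightarrow> 'a \<Rightarrow> bool) \<Rightarrow> nat \<Rightarrow> ('a \<Rightarrow> nat) \<Rightarrow> bool" where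
  "proper_colouring V E k c \<longleftrightarrow> (\<forall>v\<in>V. c v < k) \<and> (\<forall>u v. E u v \<longrightarrow> c u \<noteq> c v)"

definition chromatic_number :: "'a set \<Rightarrow> ('a \<Rightarrow> 'a \<Rightarrow> bool) \<Rightarrow> nat" where
  "chromatic_number V E = (LEAST k. \<exists>c. proper_colouring V E k c)"

definition walk :: "'a set \<Rightarrow> ('a \<Rightarrow> 'a \<Rightarrow> bool) \<Rightarrow> 'a list \<Rightarrow> bool" where
  "walk V E W \<longleftrightarrow> W \<noteq> [] \<and> set W \<subseteq> V \<and> (\<forall>i < length W - 1. E (W ! i) (W ! Suc i))"

definition walk_length :: "'a list \<Rightarrow> nat" where
  "walk_length W = length W - 1"

definition closed_walk :: "'a set \<Rightarrow> ('a \<Rightarrow> 'a \<Rightarrow> bool) \<Rightarrow> 'a list \<Rightarrow> bool" where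
  "closed_walk V E W \<longleftrightarrow> walk V E W \<and> hd W = last W"

definition traversals :: "'a list \<Rightarrow> 'a \<Rightarrow> 'a \<Rightarrow> nat" where
  "traversals W u v = card {i. i < length W - 1 \<and> {W ! i, W ! Suc i} = {u, v}}"

text \<open>Degree of v in the multigraph G + W: each edge uv of G has multiplicity
  1 + (number of traversals of uv by W).\<close>
definition degree_plus :: "'a set \<Rightarrow> ('a \<Rightarrow> 'a \<Rightarrow> bool) \<Rightarrow> 'a list \<Rightarrow> 'a \<Rightarrow> nat" where
  "degree_plus V E W v = (\<Sum>u\<in>{u \<in> V. E v u}. 1 + traversals W v u)"

text \<open>G + W is locally irregular (adjacency in G + W is adjacency in G).\<close>
definition irregularising :: "'a set \<Rightarrow> ('a \<Rightarrow> 'a \<Rightarrow> bool) \<Rightarrow> 'a list \<Rightarrow> bool" where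
  "irregularising V E W \<longleftrightarrow> walk V E W \<and>
     (\<forall>u v. E u v \<longrightarrow> degree_plus V E W u \<noteq> degree_plus V E W v)"

definition min_irreg_walk_length :: "'a set \<Rightarrow> ('a \<Rightarrow> 'a \<Rightarrow> bool) \<Rightarrow> nat" where
  "min_irreg_walk_length V E = (LEAST p. \<exists>W. irregularising V E W \<and> walk_length W = p)"

end

theory Submission
  imports Defs
begin


definition nbrs :: "'a set \<Rightarrow> ('a \<Rightarrow> 'a \<Rightarrow> bool) \<Rightarrow> 'a \<Rightarrow> 'a set" where
  "nbrs V E v = {u \<in> V. E v u}"

lemma walk_iff: "walk V E W \<longleftrightarrow> W \<noteq> [] \<and> set W \<subseteq> V \<and> successively E W"
  unfolding walk_def successively_conv_nth by (auto simp: less_diff_conv)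

lemma card_Suc_split:
  "card {i. i < Suc n \<and> P i} = (if P 0 then 1 else 0) + card {i. i < n \<and> P (Suc i)}"
proof -
  have inj: "inj_on Suc {i. i < n \<and> P (Suc i)}" by auto
  have eq: "{i. i < Suc n \<and> P i} = (if P 0 then insert 0 else id) (Suc ` {i. i < n \<and> P (Suc i)})"
    by (auto simp: image_iff less_Suc_eq_0_disj)
  have fin: "finite (Suc ` {i. i < n \<and> P (Suc i)})" by auto
  show ?thesis
    using card_image[OF inj] fin by (simp add: eq card_insert_disjoint)
qed

lemma trav_single[simp]: "traversals [x] a b = 0"
  unfolding traversals_def by simp

lemma trav_cons2:
  "traversals (x # y # rest) a b = (if {x,y} = {a,b} then 1 else 0) + traversals (y # rest) a b"
  unfolding traversals_def
  using card_Suc_split[of "length rest" "\<lambda>i. {(x # y # rest) ! i, (x # y # rest) ! Suc i} = {a, b}"]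
  by simp

lemma edge_sum:
  assumes sg: "simple_graph V E" and e: "E x y"
  shows "(\<Sum>u\<in>nbrs V E v. (if {x,y} = {v,u} then 1 else 0)) = (if x = v then 1 else 0) + (if y = v then (1::nat) else 0)"
proof -
  have xy: "x \<noteq> y" "x \<in> V" "y \<in> V" "E y x" using sg e unfolding simple_graph_def by metis+
  have fin: "finite (nbrs V E v)" using sg unfolding simple_graph_def nbrs_def by auto
  show ?thesis
  proof (cases "x = v")
    case True
    then have "(\<Sum>u\<in>nbrs V E v. (if {x,y} = {v,u} then 1 else 0)) = (\<Sum>u\<in>nbrs V E v. (if u = y then 1 else (0::nat)))"
      using xy by (intro sum.cong) (auto simp: doubleton_eq_iff)
    also have "\<dots> = 1" using True xy e sum.delta[OF fin, of y "\<lambda>_. 1::nat"] by (simp add: nbrs_def)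
    finally show ?thesis using True xy by simp
  next
    case False
    note F = False
    show ?thesis
    proof (cases "y = v")
      case True
      then have "(\<Sum>u\<in>nbrs V E v. (if {x,y} = {v,u} then 1 else 0)) = (\<Sum>u\<in>nbrs V E v. (if u = x then 1 else (0::nat)))"
        using xy by (intro sum.cong) (auto simp: doubleton_eq_iff)
      also have "\<dots> = 1" using True xy sum.delta[OF fin, of x "\<lambda>_. 1::nat"] by (simp add: nbrs_def)
      finally show ?thesis using True F by simp
    next
      case False
      then have "(\<Sum>u\<in>nbrs V E v. (if {x,y} = {v,u} then 1 else 0)) = (\<Sum>u\<in>nbrs V E v. (0::nat))"
        using F by (intro sum.cong) (auto simp: doubleton_eq_iff)
      then show ?thesis using F False by simp
    qed
  qed
qed

lemma trav_sum:
  assumes sg: "simple_graph V E"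
  shows "successively E W \<Longrightarrow> W \<noteq> [] \<Longrightarrow>
    int (\<Sum>u\<in>nbrs V E v. traversals W v u) = 2 * int (count_list W v) - (if hd W = v then 1 else 0) - (if last W = v then 1 else 0)"
proof (induction W rule: induct_list012)
  case 1
  then show ?case by simp
next
  case (2 x)
  then show ?case by simp
next
  case (3 x y zs)
  have e: "E x y" using 3 by simp
  have "(\<Sum>u\<in>nbrs V E v. traversals (x # y # zs) v u) =
        (\<Sum>u\<in>nbrs V E v. (if {x,y} = {v,u} then 1 else 0)) + (\<Sum>u\<in>nbrs V E v. traversals (y # zs) v u)"
    by (simp add: trav_cons2 sum.distrib)
  also have "\<dots> = (if x = v then 1 else 0) + (if y = v then 1 else 0) + (\<Sum>u\<in>nbrs V E v. traversals (y # zs) v u)"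
    using edge_sum[OF sg e] by simp
  finally have h: "(\<Sum>u\<in>nbrs V E v. traversals (x # y # zs) v u) = (if x = v then 1 else 0) + (if y = v then 1 else 0) + (\<Sum>u\<in>nbrs V E v. traversals (y # zs) v u)" .
  have IH: "int (\<Sum>u\<in>nbrs V E v. traversals (y # zs) v u) = 2 * int (count_list (y # zs) v) - (if y = v then 1 else 0) - (if last (y # zs) = v then 1 else 0)"
    using 3 by simp
  show ?case using h IH by auto
qed

definition val :: "'a set \<Rightarrow> ('a \<Rightarrow> 'a \<Rightarrow> bool) \<Rightarrow> 'a list \<Rightarrow> 'a \<Rightarrow> int" where
  "val V E W v = int (degree V E v) + 2 * int (count_list W v) - (if hd W = v then 1 else 0) - (if last W = v then 1 else 0)"

lemma dp_val:
  assumes sg: "simple_graph V E" and w: "walk V E W"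
  shows "int (degree_plus V E W v) = val V E W v"
proof -
  have fin: "finite (nbrs V E v)" using sg unfolding simple_graph_def nbrs_def by auto
  have "degree_plus V E W v = card (nbrs V E v) + (\<Sum>u\<in>nbrs V E v. traversals W v u)"
    unfolding degree_plus_def nbrs_def[symmetric] by (subst sum.distrib) simp
  then show ?thesis using trav_sum[OF sg, of W v] w unfolding walk_iff val_def degree_def nbrs_def
    by simp
qed

lemma irreg_intro:
  assumes sg: "simple_graph V E" and w: "walk V E W"
    and h: "\<And>a b. E a b \<Longrightarrow> val V E W a \<noteq> val V E W b"
  shows "irregularising V E W"
  unfolding irregularising_def using w h dp_val[OF sg w] by metis



fun expw :: "'a list \<Rightarrow> (nat \<Rightarrow> nat) \<Rightarrow> 'a list" where
  "expw (x # y # rest) m = x # concat (replicate (m 0) [y, x]) @ expw (y # rest) (\<lambda>i. m (Suc i))"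
| "expw xs m = xs"

lemma count_rep: "count_list (concat (replicate n [y, x])) v = n * (of_bool (y = v) + of_bool (x = v))"
  by (induction n) auto

lemma succ_rep: "E x y \<Longrightarrow> E y x \<Longrightarrow> successively E (x # concat (replicate n [y, x])) \<and> last (x # concat (replicate n [y, x])) = x"
  by (induction n) auto

lemma set_rep: "set (concat (replicate n [y, x])) \<subseteq> {x, y}"
  by (induction n) auto

lemma count_cons: "count_list (x # L) v = of_bool (x = v) + count_list L v"
  by simp

lemma expw_hd: "hd (expw W m) = hd W"
  by (induction W m rule: expw.induct) auto

lemma expw_ne: "expw W m = [] \<longleftrightarrow> W = []"
  by (induction W m rule: expw.induct) auto

lemma expw_last: "last (expw W m) = last W"
  by (induction W m rule: expw.induct) (auto simp: expw_ne)

lemma expw_set: "set (expw W m) = set W"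
proof (induction W m rule: expw.induct)
  case (1 x y rest m)
  then show ?case using set_rep[of "m 0" y x] by auto
qed auto

lemma expw_succ: "(\<And>a b. E a b \<Longrightarrow> E b a) \<Longrightarrow> successively E W \<Longrightarrow> successively E (expw W m)"
proof (induction W m rule: expw.induct)
  case (1 x y rest m)
  have e: "E x y" "E y x" using 1 by auto
  have s: "successively E (expw (y # rest) (\<lambda>i. m (Suc i)))" using 1 by auto
  have h: "hd (expw (y # rest) (\<lambda>i. m (Suc i))) = y" using expw_hd[of "y # rest"] by simp
  have ne: "expw (y # rest) (\<lambda>i. m (Suc i)) \<noteq> []" by (simp add: expw_ne)
  have "expw (x # y # rest) m = (x # concat (replicate (m 0) [y, x])) @ expw (y # rest) (\<lambda>i. m (Suc i))" by simp
  then show ?case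
    using succ_rep[of E x y "m 0"] s h ne e by (simp only: successively_append_iff) auto
qed auto

lemma expw_length: "length (expw W m) = length W + 2 * (\<Sum>i<length W - 1. m i)"
proof (induction W m rule: expw.induct)
  case (1 x y rest m)
  have len: "length (x # y # rest) - 1 = Suc (length (y # rest) - 1)" by simp
  have "(\<Sum>i<length (x # y # rest) - 1. m i) = m 0 + (\<Sum>i<length (y # rest) - 1. m (Suc i))"
    unfolding len sum.lessThan_Suc_shift by simp
  then show ?case using 1 by (simp add: length_concat sum_list_replicate)
qed auto

lemma expw_count: "count_list (expw W m) v = count_list W v +
   (\<Sum>i<length W - 1. m i * (of_bool (W ! i = v) + of_bool (W ! Suc i = v)))"
proof (induction W m rule: expw.induct)
  case (1 x y rest m)
  define f where "f = (\<lambda>i. m i * (of_bool ((x # y # rest) ! i = v) + of_bool ((x # y # rest) ! Suc i = v)))"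
  have len: "length (x # y # rest) - 1 = Suc (length (y # rest) - 1)" by simp
  have s1: "(\<Sum>i<length (x # y # rest) - 1. f i) = f 0 + (\<Sum>i<length (y # rest) - 1. f (Suc i))"
    unfolding len by (rule sum.lessThan_Suc_shift)
  have f0: "f 0 = m 0 * (of_bool (x = v) + of_bool (y = v))" unfolding f_def by simp
  have fS: "\<And>i. f (Suc i) = m (Suc i) * (of_bool ((y # rest) ! i = v) + of_bool ((y # rest) ! Suc i = v))"
    unfolding f_def by simp
  have IH: "count_list (expw (y # rest) (\<lambda>i. m (Suc i))) v = count_list (y # rest) v +
      (\<Sum>i<length (y # rest) - 1. m (Suc i) * (of_bool ((y # rest) ! i = v) + of_bool ((y # rest) ! Suc i = v)))"
    by (rule 1)
  have c1: "count_list (expw (x # y # rest) m) v = of_bool (x = v) + m 0 * (of_bool (y = v) + of_bool (x = v)) + count_list (expw (y # rest) (\<lambda>i. m (Suc i))) v"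
  proof -
    have e: "expw (x # y # rest) m = x # (concat (replicate (m 0) [y, x]) @ expw (y # rest) (\<lambda>i. m (Suc i)))"
      by (simp only: expw.simps(1) append_Cons)
    show ?thesis unfolding e count_cons count_list_append count_rep by simp
  qed
  have c2: "count_list (x # y # rest) v = of_bool (x = v) + count_list (y # rest) v" by (rule count_cons)
  have s2: "(\<Sum>i<length (x # y # rest) - 1. f i) = m 0 * (of_bool (x = v) + of_bool (y = v)) + (\<Sum>i<length (y # rest) - 1. m (Suc i) * (of_bool ((y # rest) ! i = v) + of_bool ((y # rest) ! Suc i = v)))"
    unfolding s1 f0 fS by (rule refl)
  show ?case unfolding f_def[symmetric] s2 c1 c2 IH by (simp only: algebra_simps)
qed auto

lemma expw_walk:
  assumes sg: "simple_graph V E" and w: "walk V E W"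
  shows "walk V E (expw W m)"
proof -
  have sym: "\<And>a b. E a b \<Longrightarrow> E b a" using sg unfolding simple_graph_def by blast
  have "successively E W" "W \<noteq> []" "set W \<subseteq> V" using w unfolding walk_iff by auto
  then show ?thesis unfolding walk_iff using expw_succ[OF sym, where W=W and m=m] expw_set[of W m] expw_ne[of W m] by simp
qed

lemma expw_start: assumes "m 0 = 0" shows "expw (x # y # rest) m = x # expw (y # rest) (\<lambda>i. m (Suc i))"
  by (simp only: expw.simps(1) assms replicate_0 concat.simps(1) append_Nil)



definition proc :: "'a list \<Rightarrow> 'a \<Rightarrow> nat \<Rightarrow> bool" where
  "proc W r j \<longleftrightarrow> 0 < j \<and> j < length W - 1 \<and> W ! j \<noteq> r \<and> (\<forall>l. j < l \<and> l < length W - 1 \<longrightarrow> W ! l \<noteq> W ! j)"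

definition Sm :: "'a list \<Rightarrow> (nat \<Rightarrow> nat) \<Rightarrow> 'a \<Rightarrow> nat" where
  "Sm W m v = (\<Sum>i<length W - 1. m i * (of_bool (W ! i = v) + of_bool (W ! Suc i = v)))"

lemma Sm_upd:
  assumes mi: "m i = 0" and ip: "i < length W - 1"
  shows "Sm W (m(i := t)) u = Sm W m u + t * (of_bool (W ! i = u) + of_bool (W ! Suc i = u))"
proof -
  define g where "g = (\<lambda>j. of_bool (W ! j = u) + of_bool (W ! Suc j = u) :: nat)"
  have gen: "Sm W m' u = (\<Sum>j<length W - 1. m' j * g j)" for m' unfolding Sm_def g_def by simp
  have "Sm W (m(i := t)) u = (\<Sum>j<length W - 1. m j * g j + (if j = i then t * g i else 0))"
    unfolding gen by (intro sum.cong) (auto simp: mi)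
  also have "\<dots> = Sm W m u + t * g i"
    unfolding gen sum.distrib using ip by simp
  finally show ?thesis unfolding g_def .
qed

lemma processing:
  fixes W :: "'a list" and X :: "'a \<Rightarrow> int" and c :: "'a \<Rightarrow> nat"
  assumes k: "0 < k" and cl: "W ! (length W - 1) = r"
    and ne: "\<And>i. Suc i < length W \<Longrightarrow> W ! i \<noteq> W ! Suc i"
    and cv: "\<And>j. proc W r j \<Longrightarrow> c (W ! j) < k"
  shows "i \<le> length W - 1 \<Longrightarrow> \<exists>m. (\<forall>j. m j < k) \<and> (\<forall>j. m j \<noteq> 0 \<longrightarrow> proc W r j \<and> j < i) \<and>
          (\<forall>j<i. proc W r j \<longrightarrow> (X (W ! j) + 2 * int (Sm W m (W ! j))) div 2 mod int k = int (c (W ! j)))"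
proof (induction i)
  case 0
  then show ?case using k by (intro exI[of _ "\<lambda>_. 0"]) simp
next
  case (Suc i)
  then obtain m where m1: "\<forall>j. m j < k" and m2: "\<forall>j. m j \<noteq> 0 \<longrightarrow> proc W r j \<and> j < i"
    and m3: "\<forall>j<i. proc W r j \<longrightarrow> (X (W ! j) + 2 * int (Sm W m (W ! j))) div 2 mod int k = int (c (W ! j))"
    by auto
  have ip: "i < length W - 1" using Suc.prems by simp
  show ?case
  proof (cases "proc W r i")
    case False
    have A: "\<forall>j. m j \<noteq> 0 \<longrightarrow> proc W r j \<and> j < Suc i" using m2 less_SucI by blast
    have B: "\<forall>j<Suc i. proc W r j \<longrightarrow> (X (W ! j) + 2 * int (Sm W m (W ! j))) div 2 mod int k = int (c (W ! j))"
    proof (intro allI impI)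
      fix j assume "j < Suc i" "proc W r j"
      then have "j < i" using False by (auto simp: less_Suc_eq)
      then show "(X (W ! j) + 2 * int (Sm W m (W ! j))) div 2 mod int k = int (c (W ! j))"
        using m3 \<open>proc W r j\<close> by simp
    qed
    show ?thesis using m1 A B by blast
  next
    case True
    define v where "v = W ! i"
    define Y where "Y = (X v + 2 * int (Sm W m v)) div 2"
    define t where "t = nat ((int (c v) - Y) mod int k)"
    define m' where "m' = m(i := t)"
    have mi: "m i = 0" using m2 by auto
    have tk: "t < k" using k unfolding t_def by (simp add: nat_less_iff)
    have old: "Sm W m' (W ! j) = Sm W m (W ! j)" if j: "j < i" "proc W r j" for j
    proof -
      have a: "W ! i \<noteq> W ! j" using j ip unfolding proc_def by auto
      have b: "W ! Suc i \<noteq> W ! j"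
      proof (cases "Suc i < length W - 1")
        case True then show ?thesis using j unfolding proc_def by auto
      next
        case False then have "Suc i = length W - 1" using ip by simp
        then show ?thesis using cl j unfolding proc_def by auto
      qed
      show ?thesis unfolding m'_def Sm_upd[of m i W, OF mi ip] using a b by simp
    qed
    have new: "Sm W m' v = Sm W m v + t"
    proof -
      have "Suc i < length W" using ip by simp
      then have "W ! Suc i \<noteq> v" using ne[of i] unfolding v_def by auto
      then show ?thesis unfolding m'_def Sm_upd[of m i W, OF mi ip] v_def by simp
    qed
    have newmod: "(X v + 2 * int (Sm W m' v)) div 2 mod int k = int (c v)"
    proof -
      have "(X v + 2 * int (Sm W m' v)) div 2 = Y + int t" unfolding new Y_def by simp
      moreover have "int t = (int (c v) - Y) mod int k" unfolding t_def using k by simp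
      ultimately have "(X v + 2 * int (Sm W m' v)) div 2 mod int k = (Y + (int (c v) - Y) mod int k) mod int k" by simp
      also have "\<dots> = int (c v) mod int k" by (simp add: mod_add_right_eq)
      also have "\<dots> = int (c v)" using cv[OF True] unfolding v_def by simp
      finally show ?thesis .
    qed
    have A0: "\<forall>j. m' j < k" using m1 tk unfolding m'_def by simp
    have A: "\<forall>j. m' j \<noteq> 0 \<longrightarrow> proc W r j \<and> j < Suc i"
    proof (intro allI impI)
      fix j assume "m' j \<noteq> 0" then show "proc W r j \<and> j < Suc i" using m2[rule_format, of j] True unfolding m'_def
        by (cases "j = i") auto
    qed
    have B: "\<forall>j<Suc i. proc W r j \<longrightarrow> (X (W ! j) + 2 * int (Sm W m' (W ! j))) div 2 mod int k = int (c (W ! j))"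
    proof (intro allI impI)
      fix j assume j: "j < Suc i" "proc W r j"
      show "(X (W ! j) + 2 * int (Sm W m' (W ! j))) div 2 mod int k = int (c (W ! j))"
      proof (cases "j = i")
        case True then show ?thesis using newmod unfolding v_def by simp
      next
        case False then have "j < i" using j by simp
        then show ?thesis using old[OF _ j(2)] m3 j(2) by simp
      qed
    qed
    show ?thesis using A0 A B by blast
  qed
qed

lemma proc_exists:
  assumes "v \<in> set W" "v \<noteq> r" "W ! 0 = r" "W ! (length W - 1) = r"
  shows "\<exists>j. proc W r j \<and> W ! j = v"
proof -
  define S where "S = {j. j < length W - 1 \<and> W ! j = v}"
  obtain i where i: "i < length W" "W ! i = v" using assms(1) by (auto simp: in_set_conv_nth)
  have "i \<noteq> length W - 1" using i assms by auto
  then have iS: "i \<in> S" using i unfolding S_def by auto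
  have fS: "finite S" unfolding S_def by auto
  define j where "j = Max S"
  have jS: "j \<in> S" unfolding j_def using fS iS by (intro Max_in) auto
  have jmax: "\<And>l. l \<in> S \<Longrightarrow> l \<le> j" unfolding j_def using fS by simp
  have "proc W r j"
    unfolding proc_def
  proof (intro conjI allI impI)
    show "0 < j" using jS assms unfolding S_def by (cases j) auto
    show "j < length W - 1" using jS unfolding S_def by auto
    show "W ! j \<noteq> r" using jS assms unfolding S_def by auto
    fix l assume "j < l \<and> l < length W - 1"
    then show "W ! l \<noteq> W ! j" using jmax[of l] jS unfolding S_def by auto
  qed
  then show ?thesis using jS unfolding S_def by auto
qed

lemma proc_card:
  assumes "set W \<subseteq> V" "finite V" "r \<in> V"
  shows "card {j. j < length W - 1 \<and> proc W r j} \<le> card V - 1"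
proof -
  have inj: "inj_on (\<lambda>j. W ! j) {j. j < length W - 1 \<and> proc W r j}"
  proof (rule inj_onI)
    fix a b assume a: "a \<in> {j. j < length W - 1 \<and> proc W r j}" and b: "b \<in> {j. j < length W - 1 \<and> proc W r j}"
      and e: "W ! a = W ! b"
    show "a = b"
    proof (rule ccontr)
      assume "a \<noteq> b"
      then consider "a < b" | "b < a" by linarith
      then show False
      proof cases
        case 1 then show False using a b e unfolding proc_def by auto
      next
        case 2 then show False using a b e unfolding proc_def by auto
      qed
    qed
  qed
  have sub: "(\<lambda>j. W ! j) ` {j. j < length W - 1 \<and> proc W r j} \<subseteq> V - {r}"
  proof
    fix x assume "x \<in> (\<lambda>j. W ! j) ` {j. j < length W - 1 \<and> proc W r j}"
    then obtain j where j: "j < length W - 1" "proc W r j" "x = W ! j" by auto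
    then have "x \<in> set W" by auto
    then show "x \<in> V - {r}" using j assms(1) unfolding proc_def by auto
  qed
  have "card {j. j < length W - 1 \<and> proc W r j} \<le> card (V - {r})"
    using card_inj_on_le[OF inj sub] assms(2) by simp
  then show ?thesis using assms by simp
qed

lemma sum_bound:
  assumes "\<forall>j. m j < k" "\<forall>j. m j \<noteq> 0 \<longrightarrow> proc W r j"
  shows "(\<Sum>j<length W - 1. m j) \<le> (k - 1) * card {j. j < length W - 1 \<and> proc W r j}"
proof -
  have "(\<Sum>j<length W - 1. m j) \<le> (\<Sum>j<length W - 1. (k - 1) * of_bool (proc W r j))"
  proof (intro sum_mono)
    fix j
    show "m j \<le> (k - 1) * of_bool (proc W r j)"
    proof (cases "proc W r j")
      case True then show ?thesis using assms(1)[rule_format, of j] by simp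
    next
      case False then show ?thesis using assms(2)[rule_format, of j] by auto
    qed
  qed
  also have "\<dots> = (k - 1) * card ({..<length W - 1} \<inter> {j. proc W r j})"
    by (simp add: sum_distrib_left[symmetric])
  also have "{..<length W - 1} \<inter> {j. proc W r j} = {j. j < length W - 1 \<and> proc W r j}" by auto
  finally show ?thesis .
qed



fun alt :: "'a \<Rightarrow> 'a \<Rightarrow> nat \<Rightarrow> 'a list" where
  "alt a b 0 = []"
| "alt a b (Suc n) = a # alt b a n"

lemma alt_count: "a \<noteq> b \<Longrightarrow> count_list (alt a b n) v = (if v = a then (n + 1) div 2 else if v = b then n div 2 else 0)"
proof (induction n arbitrary: a b)
  case 0 then show ?case by simp
next
  case (Suc n)
  have IH: "count_list (alt b a n) v = (if v = b then (n + 1) div 2 else if v = a then n div 2 else 0)"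
    using Suc.IH[of b a] Suc.prems by auto
  show ?case using Suc.prems unfolding alt.simps count_cons IH by auto
qed

lemma alt_succ: "E a b \<Longrightarrow> E b a \<Longrightarrow> successively E (alt a b n)"
proof (induction n arbitrary: a b)
  case 0 then show ?case by simp
next
  case (Suc n)
  then show ?case by (cases n) (auto simp: successively_Cons)
qed

lemma alt_hd: "0 < n \<Longrightarrow> hd (alt a b n) = a"
  by (cases n) auto

lemma alt_last: "0 < n \<Longrightarrow> last (alt a b n) = (if odd n then a else b)"
proof (induction n arbitrary: a b)
  case 0 then show ?case by simp
next
  case (Suc n)
  show ?case
  proof (cases n)
    case 0 then show ?thesis by simp
  next
    case (Suc m)
    then have "alt b a n \<noteq> []" by simp
    then show ?thesis using Suc.IH[of b a] \<open>n = Suc m\<close> by auto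
  qed
qed

lemma alt_set: "set (alt a b n) \<subseteq> {a, b}"
  by (induction n arbitrary: a b) auto

lemma alt_length[simp]: "length (alt a b n) = n"
  by (induction n arbitrary: a b) auto

lemma nbrs_finite: "simple_graph V E \<Longrightarrow> finite (nbrs V E v)"
  unfolding simple_graph_def nbrs_def by auto

lemma nbrs_card: "card (nbrs V E v) = degree V E v"
  unfolding nbrs_def degree_def by simp

lemma finish:
  assumes sg: "simple_graph V E" and pc: "proper_colouring V E k c"
    and inv: "\<And>v. v \<in> V \<Longrightarrow> v \<noteq> r \<Longrightarrow> f v div 2 mod int k = int (c v)"
    and rt: "\<And>u. E r u \<Longrightarrow> f u \<noteq> f r"
    and e: "E a b"
  shows "f a \<noteq> f b"
proof -
  have ab: "a \<in> V" "b \<in> V" "E b a" using sg e unfolding simple_graph_def by metis+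
  show ?thesis
  proof (cases "a = r")
    case True then show ?thesis using rt e by metis
  next
    case F1: False
    show ?thesis
    proof (cases "b = r")
      case True then show ?thesis using rt ab by metis
    next
      case False
      have "c a \<noteq> c b" using pc e unfolding proper_colouring_def by blast
      then show ?thesis using inv[OF ab(1) F1] inv[OF ab(2) False] by auto
    qed
  qed
qed

lemma val_tail:
  assumes h: "hd We = r" and l: "last We = r" and wr: "w \<noteq> r" and ne: "We \<noteq> []"
  shows "val V E (We @ alt w r L) v = val V E We v + int L * (of_bool (v = r) + of_bool (v = w))"
proof (cases "L = 0")
  case True then show ?thesis by simp
next
  case False
  then have hd': "hd (We @ alt w r L) = r" and last': "last (We @ alt w r L) = (if odd L then w else r)"
  proof -
    have "alt w r L \<noteq> []" using False by (cases L) auto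
    then show "hd (We @ alt w r L) = r" "last (We @ alt w r L) = (if odd L then w else r)"
      using h ne alt_last[of L w r] False by auto
  qed
  show ?thesis
  proof (cases "even L")
    case True
    then obtain q where q: "L = 2 * q" by (elim evenE)
    show ?thesis unfolding val_def hd' last' count_list_append alt_count[OF wr] using True h l wr q by auto
  next
    case False
    then obtain q where q: "L = 2 * q + 1" by (elim oddE)
    show ?thesis unfolding val_def hd' last' count_list_append alt_count[OF wr] using False h l wr q by auto
  qed
qed



lemma root_stage:
  assumes sg: "simple_graph V E" and pc: "proper_colouring V E k c"
    and wk: "walk V E We" and hr: "hd We = r" and lr: "last We = r" and rV: "r \<in> V"
    and setV: "set We = V"
    and inv: "\<And>v. v \<in> V \<Longrightarrow> v \<noteq> r \<Longrightarrow> val V E We v div 2 mod int k = int (c v)"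
    and d1: "degree V E r \<noteq> 1"
    and kD: "k \<le> D + 1" and degD: "\<And>v. v \<in> V \<Longrightarrow> degree V E v \<le> D"
  shows "\<exists>W'. irregularising V E W' \<and> walk_length W' \<le> walk_length We + 2 * D"
proof -
  define F where "F = val V E We r"
  have sym: "\<And>a b. E a b \<Longrightarrow> E b a" and inV: "\<And>a b. E a b \<Longrightarrow> a \<in> V \<and> b \<in> V"
    and irr: "\<And>a. \<not> E a a" using sg unfolding simple_graph_def by blast+
  have weV: "set We \<subseteq> V" "We \<noteq> []" "successively E We" using wk unfolding walk_iff by auto
  consider (A) "\<forall>u. E r u \<longrightarrow> val V E We u \<noteq> F" | (B) "\<exists>w. E r w \<and> val V E We w \<noteq> F"
    | (C) "\<exists>u. E r u" "\<forall>u. E r u \<longrightarrow> val V E We u = F" by blast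
  then show ?thesis
  proof cases
    case A
    have "irregularising V E We"
    proof (rule irreg_intro[OF sg wk])
      fix a b assume "E a b"
      show "val V E We a \<noteq> val V E We b"
        by (rule finish[OF sg pc, of r "val V E We"]) (use inv A \<open>E a b\<close> in \<open>auto simp: F_def\<close>)
    qed
    then show ?thesis by auto
  next
    case B
    then obtain w where rw: "E r w" and wF: "val V E We w \<noteq> F" by blast
    have wV: "w \<in> V" and wr: "w \<noteq> r" using inV[OF rw] irr rw by auto
    define dr where "dr = degree V E r"
    define dw where "dw = degree V E w"
    have wN: "w \<in> nbrs V E r" and rN: "r \<in> nbrs V E w" using rw sym inV unfolding nbrs_def by auto
    have dr1: "dr \<ge> 1"
    proof -
      have "nbrs V E r \<noteq> {}" using wN by auto
      then have "card (nbrs V E r) \<noteq> 0" using nbrs_finite[OF sg] by simp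
      then show ?thesis unfolding dr_def nbrs_card by simp
    qed
    have dw1: "dw \<ge> 1"
    proof -
      have "nbrs V E w \<noteq> {}" using rN by auto
      then have "card (nbrs V E w) \<noteq> 0" using nbrs_finite[OF sg] by simp
      then show ?thesis unfolding dw_def nbrs_card by simp
    qed
    define Bad where "Bad = (\<lambda>u. val V E We u - F) ` (nbrs V E r - {w}) \<union> (\<lambda>x. val V E We x - val V E We w) ` (nbrs V E w - {r})"
    have finB: "finite Bad" unfolding Bad_def using nbrs_finite[OF sg] by auto
    have cB: "card Bad \<le> (dr - 1) + (dw - 1)"
    proof -
      have "card Bad \<le> card ((\<lambda>u. val V E We u - F) ` (nbrs V E r - {w})) + card ((\<lambda>x. val V E We x - val V E We w) ` (nbrs V E w - {r}))"
        unfolding Bad_def by (rule card_Un_le)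
      also have "\<dots> \<le> card (nbrs V E r - {w}) + card (nbrs V E w - {r})"
        by (intro add_mono card_image_le) (auto simp: nbrs_finite[OF sg])
      also have "\<dots> = (dr - 1) + (dw - 1)"
        using wN rN nbrs_finite[OF sg] unfolding dr_def dw_def nbrs_card[symmetric] by simp
      finally show ?thesis .
    qed
    define M where "M = dr + dw - 2"
    obtain L where LM: "L \<le> M" and LB: "int L \<notin> Bad"
    proof -
      have "\<not> (int ` {0..M} \<subseteq> Bad)"
      proof
        assume sub: "int ` {0..M} \<subseteq> Bad"
        then have "card (int ` {0..M}) \<le> card Bad" using finB card_mono by blast
        moreover have "card (int ` {0..M}) = M + 1" by (simp add: card_image)
        ultimately show False using cB dr1 dw1 unfolding M_def by linarith
      qed
      then obtain x where "x \<in> {0..M}" "int x \<notin> Bad" by blast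
      then show ?thesis using that by auto
    qed
    define W' where "W' = We @ alt w r L"
    have vW: "\<And>v. val V E W' v = val V E We v + int L * (of_bool (v = r) + of_bool (v = w))"
      unfolding W'_def using val_tail[OF hr lr wr weV(2)] .
    have wk': "walk V E W'"
    proof -
      have "set W' \<subseteq> V" unfolding W'_def using weV alt_set[of w r L] wV rV by auto
      moreover have "successively E W'"
      proof (cases "L = 0")
        case True then show ?thesis unfolding W'_def using weV by simp
      next
        case False
        then show ?thesis unfolding W'_def successively_append_iff
          using weV alt_succ[of E w r L] rw sym alt_hd[of L w r] lr by auto
      qed
      ultimately show ?thesis unfolding walk_iff W'_def using weV by auto
    qed
    have key: "val V E W' a \<noteq> val V E W' b" if ab: "E a b" "a = r \<or> a = w" for a b
    proof -
      have bV: "b \<in> V" "b \<noteq> a" using inV[OF ab(1)] irr ab(1) by auto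
      show ?thesis
      proof (cases "a = r")
        case True
        show ?thesis
        proof (cases "b = w")
          case True then show ?thesis using \<open>a = r\<close> vW wF wr unfolding F_def by simp
        next
          case False
          then have "b \<in> nbrs V E r - {w}" using ab \<open>a = r\<close> bV unfolding nbrs_def by auto
          then have "val V E We b - F \<in> Bad" unfolding Bad_def by auto
          then have "val V E We b - F \<noteq> int L" using LB by metis
          then show ?thesis using \<open>a = r\<close> False vW[of r] vW[of b] bV wr unfolding F_def by auto
        qed
      next
        case False
        then have aw: "a = w" using ab by simp
        then have "b \<noteq> w" using bV by simp
        show ?thesis
        proof (cases "b = r")
          case True then show ?thesis using aw vW wF wr unfolding F_def by auto
        next
          case False
          then have "b \<in> nbrs V E w - {r}" using ab aw bV unfolding nbrs_def by auto
          then have "val V E We b - val V E We w \<in> Bad" unfolding Bad_def by auto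
          then have "val V E We b - val V E We w \<noteq> int L" using LB by metis
          then show ?thesis using aw False \<open>b \<noteq> w\<close> vW[of w] vW[of b] wr by auto
        qed
      qed
    qed
    have "irregularising V E W'"
    proof (rule irreg_intro[OF sg wk'])
      fix a b assume e: "E a b"
      show "val V E W' a \<noteq> val V E W' b"
      proof (cases "a = r \<or> a = w")
        case True then show ?thesis using key e by blast
      next
        case F1: False
        show ?thesis
        proof (cases "b = r \<or> b = w")
          case True then show ?thesis using key[of b a] sym[OF e] by metis
        next
          case False
          have abV: "a \<in> V" "b \<in> V" using inV[OF e] by auto
          have "val V E W' a = val V E We a" "val V E W' b = val V E We b" using vW F1 False by auto
          moreover have "c a \<noteq> c b" using pc e unfolding proper_colouring_def by blast
          ultimately show ?thesis using inv[of a] inv[of b] abV F1 False by auto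
        qed
      qed
    qed
    moreover have "walk_length W' \<le> walk_length We + 2 * D"
    proof -
      have "dr \<le> D" "dw \<le> D" using degD rV wV unfolding dr_def dw_def by auto
      then have "L \<le> 2 * D" using LM unfolding M_def by linarith
      then show ?thesis unfolding walk_length_def W'_def by simp
    qed
    ultimately show ?thesis by blast
  next
    case C
    then have allF: "\<And>u. E r u \<Longrightarrow> val V E We u = F" by blast
    obtain u0 where ru0: "E r u0" using C by blast
    have dr2: "2 \<le> degree V E r"
    proof -
      have "u0 \<in> nbrs V E r" using ru0 inV unfolding nbrs_def by auto
      then have "card (nbrs V E r) \<noteq> 0" using nbrs_finite[OF sg] by auto
      then show ?thesis using d1 unfolding nbrs_card by linarith
    qed
    obtain w1 rest2 where Wec: "We = r # w1 # rest2"
    proof (cases We)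
      case Nil then show ?thesis using weV by simp
    next
      case (Cons x xs)
      then have x: "x = r" using hr by simp
      have "u0 \<in> set We" using setV inV[OF ru0] by auto
      moreover have "u0 \<noteq> r" using ru0 irr by auto
      ultimately have "xs \<noteq> []" using Cons x by auto
      then obtain y ys where "xs = y # ys" by (cases xs) auto
      then show ?thesis using that Cons x by simp
    qed
    have rw1: "E r w1" using weV(3) unfolding Wec by simp
    have w1N: "w1 \<in> nbrs V E r" using rw1 inV unfolding nbrs_def by auto
    obtain w where wN: "w \<in> nbrs V E r" and ww1: "w \<noteq> w1"
    proof -
      have "nbrs V E r - {w1} \<noteq> {}"
      proof
        assume "nbrs V E r - {w1} = {}"
        then have "nbrs V E r \<subseteq> {w1}" by auto
        then have "card (nbrs V E r) \<le> 1" using card_mono[of "{w1}"] by fastforce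
        then show False using dr2 unfolding nbrs_card by simp
      qed
      then show ?thesis using that by blast
    qed
    have rw: "E r w" and wV: "w \<in> V" using wN unfolding nbrs_def by auto
    have wr: "w \<noteq> r" and w1r: "w1 \<noteq> r" using rw rw1 irr by auto
    have w1V: "w1 \<in> V" using w1N unfolding nbrs_def by auto
    have k2: "2 \<le> k"
    proof -
      have "c r \<noteq> c w1" "c r < k" "c w1 < k" using pc rw1 rV w1V unfolding proper_colouring_def by auto
      then show ?thesis by linarith
    qed
    have Fw1: "val V E We w1 = F" and Fw: "val V E We w = F" using allF rw1 rw by auto
    have invw1: "F div 2 mod int k = int (c w1)" using inv[OF w1V w1r] Fw1 by simp
    have invw: "F div 2 mod int k = int (c w)" using inv[OF wV wr] Fw by simp
    show ?thesis
    proof (cases "even F")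
      case True
      define W' where "W' = w1 # We @ [w]"
      have vW: "val V E W' v = val V E We v + 2 * of_bool (v = r) + of_bool (v = w1) + of_bool (v = w)" for v
        unfolding W'_def val_def using hr lr wr w1r ww1 by auto
      have wk': "walk V E W'"
      proof -
        have "set W' \<subseteq> V" unfolding W'_def using weV wV w1V by auto
        moreover have "successively E W'"
        proof -
          have l0: "last (w1 # rest2) = r" using lr Wec by simp
          have s0: "successively E (w1 # rest2)" using weV(3) unfolding Wec by simp
          have "successively E ((w1 # rest2) @ [w])" unfolding successively_append_iff using l0 s0 rw by simp
          then have "successively E (r # (w1 # rest2) @ [w])" using rw1 by simp
          then have "successively E (w1 # r # (w1 # rest2) @ [w])" using sym[OF rw1] by simp
          then show ?thesis unfolding W'_def Wec by simp
        qed
        ultimately show ?thesis unfolding walk_iff W'_def by auto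
      qed
      have "irregularising V E W'"
      proof (rule irreg_intro[OF sg wk'])
        fix a b assume e: "E a b"
        show "val V E W' a \<noteq> val V E W' b"
        proof (rule finish[OF sg pc, of r "val V E W'"])
          fix v assume v: "v \<in> V" "v \<noteq> r"
          show "val V E W' v div 2 mod int k = int (c v)"
          proof (cases "v = w1 \<or> v = w")
            case True
            then have "val V E W' v = F + 1" using vW[of v] Fw1 Fw v ww1 by auto
            moreover have "(F + 1) div 2 = F div 2" using \<open>even F\<close> by (elim evenE) simp
            ultimately show ?thesis using True invw1 invw by auto
          next
            case False then show ?thesis using vW[of v] inv[OF v] v by simp
          qed
        next
          fix u assume "E r u"
          then have "val V E We u = F" "u \<noteq> r" using allF irr by auto
          then show "val V E W' u \<noteq> val V E W' r" using vW[of u] vW[of r] wr w1r ww1 unfolding F_def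
            by auto
        next
          show "E a b" by (rule e)
        qed
      qed
      moreover have "walk_length W' \<le> walk_length We + 2 * D"
      proof -
        have "degree V E r \<le> D" using degD rV by auto
        then show ?thesis unfolding walk_length_def W'_def using dr2 weV by simp
      qed
      ultimately show ?thesis by blast
    next
      case False
      define T where "T = w1 # rest2"
      define W' where "W' = T @ alt w r (2 * k - 1)"
      have k1: "(2 * k - 1 + 1) div 2 = k" "(2 * k - 1) div 2 = k - 1" "odd (2 * k - 1)" "0 < 2 * k - 1"
        using k2 by presburger+
      have cT: "count_list We v = of_bool (r = v) + count_list T v" for v unfolding Wec T_def by simp
      have hT: "hd T = w1" and lT: "last T = r" using lr unfolding T_def Wec by auto
      have lA: "last (alt w r (2 * k - 1)) = w" using alt_last[OF k1(4), of w r] k1(3) by simp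
      have ane: "alt w r (2 * k - 1) \<noteq> []" using k1(4) alt_length[of w r "2 * k - 1"] by (metis less_numeral_extra(3) list.size(3))
      have lW': "last W' = w" and hW': "hd W' = w1" unfolding W'_def T_def using lA ane by auto
      have vW: "val V E W' v = val V E We v + (2 * int k - 2) * of_bool (v = r) - of_bool (v = w1) + (2 * int k - 1) * of_bool (v = w)" for v
      proof -
        have "count_list W' v = count_list T v + (if v = w then k else if v = r then k - 1 else 0)"
          unfolding W'_def count_list_append alt_count[OF wr] k1(1) k1(2) ..
        then show ?thesis unfolding val_def hW' lW' cT using hr lr wr w1r ww1 k2 by auto
      qed
      have wk': "walk V E W'"
      proof -
        have "set W' \<subseteq> V" unfolding W'_def T_def using weV alt_set[of w r "2 * k - 1"] wV rV unfolding Wec by auto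
        moreover have "successively E W'"
        proof -
          have "successively E T" using weV(3) unfolding Wec T_def by simp
          moreover have "successively E (alt w r (2 * k - 1))" using alt_succ[of E w r] rw sym by auto
          moreover have "hd (alt w r (2 * k - 1)) = w" using alt_hd[OF k1(4)] .
          ultimately show ?thesis unfolding W'_def successively_append_iff using lT rw by auto
        qed
        ultimately show ?thesis unfolding walk_iff W'_def T_def by auto
      qed
      have "irregularising V E W'"
      proof (rule irreg_intro[OF sg wk'])
        fix a b assume e: "E a b"
        show "val V E W' a \<noteq> val V E W' b"
        proof (rule finish[OF sg pc, of r "val V E W'"])
          fix v assume v: "v \<in> V" "v \<noteq> r"
          show "val V E W' v div 2 mod int k = int (c v)"
          proof (cases "v = w1")
            case True
            then have "val V E W' v = F - 1" using vW[of v] Fw1 v ww1 by auto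
            moreover have "(F - 1) div 2 = F div 2" using \<open>odd F\<close> by (elim oddE) simp
            ultimately show ?thesis using True invw1 by auto
          next
            case F2: False
            show ?thesis
            proof (cases "v = w")
              case True
              then have "val V E W' v = F + (2 * int k - 1)" using vW[of v] Fw v ww1 by auto
              moreover have "(F + (2 * int k - 1)) div 2 = F div 2 + int k" using \<open>odd F\<close> by (elim oddE) simp
              ultimately show ?thesis using True invw by simp
            next
              case False then show ?thesis using vW[of v] inv[OF v] v F2 by simp
            qed
          qed
        next
          fix u assume "E r u"
          then have "val V E We u = F" "u \<noteq> r" using allF irr by auto
          then show "val V E W' u \<noteq> val V E W' r" using vW[of u] vW[of r] wr w1r ww1 k2 unfolding F_def
            by auto
        next
          show "E a b" by (rule e)
        qed
      qed
      moreover have "walk_length W' \<le> walk_length We + 2 * D"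
        unfolding walk_length_def W'_def T_def Wec using kD k2 by simp
      ultimately show ?thesis by blast
    qed
  qed
qed



lemma greedy:
  assumes sg: "simple_graph V E" and degD: "\<And>v. v \<in> V \<Longrightarrow> degree V E v \<le> D"
  shows "\<exists>c. proper_colouring V E (D + 1) c"
proof -
  have finV: "finite V" and sym: "\<And>a b. E a b \<Longrightarrow> E b a" and inV: "\<And>a b. E a b \<Longrightarrow> a \<in> V \<and> b \<in> V"
    and irr: "\<And>a. \<not> E a a" using sg unfolding simple_graph_def by blast+
  have "\<exists>c. (\<forall>v\<in>S. c v \<le> D) \<and> (\<forall>u\<in>S. \<forall>v\<in>S. E u v \<longrightarrow> c u \<noteq> c v)" if "S \<subseteq> V" for S
  proof -
    have "finite S" using that finV finite_subset by blast
    then show ?thesis using that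
    proof (induction S rule: finite_subset_induct)
      case empty
      then show ?case by auto
    next
      case (insert a F)
      then obtain c where c1: "\<forall>v\<in>F. c v \<le> D" and c2: "\<forall>u\<in>F. \<forall>v\<in>F. E u v \<longrightarrow> c u \<noteq> c v" by blast
      define used where "used = c ` (nbrs V E a \<inter> F)"
      have "card used \<le> card (nbrs V E a \<inter> F)" unfolding used_def by (rule card_image_le) (use nbrs_finite[OF sg] in auto)
      also have "\<dots> \<le> card (nbrs V E a)" by (rule card_mono) (use nbrs_finite[OF sg] in auto)
      also have "\<dots> \<le> D" unfolding nbrs_card using degD insert by auto
      finally have cu: "card used \<le> D" .
      have "\<not> {0..D} \<subseteq> used"
      proof
        assume "{0..D} \<subseteq> used"
        then have "card {0..D} \<le> card used" by (rule card_mono[rotated]) (simp add: used_def nbrs_finite[OF sg])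
        then show False using cu by simp
      qed
      then obtain col where col: "col \<le> D" "col \<notin> used" by (meson atLeastAtMost_iff subsetI zero_le)
      define c' where "c' = c(a := col)"
      have "\<forall>v\<in>insert a F. c' v \<le> D" using c1 col unfolding c'_def by auto
      moreover have "\<forall>u\<in>insert a F. \<forall>v\<in>insert a F. E u v \<longrightarrow> c' u \<noteq> c' v"
      proof (intro ballI impI)
        fix u v assume u: "u \<in> insert a F" and v: "v \<in> insert a F" and e: "E u v"
        show "c' u \<noteq> c' v"
        proof (cases "u = a")
          case True
          then have "v \<noteq> a" using e irr by auto
          then have "v \<in> nbrs V E a \<inter> F" using v e True inV[OF e] unfolding nbrs_def by auto
          then have "c v \<in> used" unfolding used_def by auto
          then show ?thesis using True \<open>v \<noteq> a\<close> col unfolding c'_def by auto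
        next
          case False
          note ua = False
          show ?thesis
          proof (cases "v = a")
            case True
            then have "u \<in> nbrs V E a \<inter> F" using u ua sym[OF e] inV[OF e] unfolding nbrs_def by auto
            then have "c u \<in> used" unfolding used_def by auto
            then show ?thesis using True ua col unfolding c'_def by auto
          next
            case False
            then show ?thesis using u v ua c2 e unfolding c'_def by auto
          qed
        qed
      qed
      ultimately show ?case by blast
    qed
  qed
  then obtain c where c1: "\<forall>v\<in>V. c v \<le> D" and c2: "\<forall>u\<in>V. \<forall>v\<in>V. E u v \<longrightarrow> c u \<noteq> c v" by blast
  have "proper_colouring V E (D + 1) c"
    unfolding proper_colouring_def using c1 c2 inV by (auto simp: less_Suc_eq_le)
  then show ?thesis by blast
qed

lemma main_nl:
  assumes sg: "simple_graph V E" and cw: "closed_walk V E W" and sW: "set W = V"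
    and d1: "degree V E (hd W) \<noteq> 1"
  shows "min_irreg_walk_length V E \<le> walk_length W + (card V - 1) * (2 * chromatic_number V E - 2)
                     + 2 * max_degree V E"
proof -
  define r where "r = hd W"
  have wk: "walk V E W" and hl: "hd W = last W" using cw unfolding closed_walk_def by auto
  have weV: "set W \<subseteq> V" "W \<noteq> []" "successively E W" using wk unfolding walk_iff by auto
  have finV: "finite V" and irr: "\<And>a. \<not> E a a" and inV: "\<And>a b. E a b \<Longrightarrow> a \<in> V \<and> b \<in> V"
    using sg unfolding simple_graph_def by blast+
  have rV: "r \<in> V" using weV sW unfolding r_def by auto
  define D where "D = max_degree V E"
  have degD: "\<And>v. v \<in> V \<Longrightarrow> degree V E v \<le> D"
    unfolding D_def max_degree_def using finV by auto
  define k where "k = chromatic_number V E"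
  have gr: "\<exists>c. proper_colouring V E (D + 1) c" by (rule greedy[OF sg]) (rule degD)
  have ex: "\<exists>k c. proper_colouring V E k c" using gr by blast
  have kc: "\<exists>c. proper_colouring V E k c" unfolding k_def chromatic_number_def
    using LeastI_ex[of "\<lambda>k. \<exists>c. proper_colouring V E k c"] ex by simp
  then obtain c where pc: "proper_colouring V E k c" by blast
  have kD: "k \<le> D + 1" unfolding k_def chromatic_number_def using Least_le[of "\<lambda>k. \<exists>c. proper_colouring V E k c" "D + 1"] gr by simp
  have k0: "0 < k" using pc rV unfolding proper_colouring_def by fastforce
  have W0: "W ! 0 = r" unfolding r_def using weV(2) by (simp add: hd_conv_nth)
  have Wl: "W ! (length W - 1) = r" unfolding r_def hl using weV(2) by (simp add: last_conv_nth)
  have ne: "\<And>i. Suc i < length W \<Longrightarrow> W ! i \<noteq> W ! Suc i"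
    using successively_nth[OF weV(3)] irr by metis
  have cv: "\<And>j. proc W r j \<Longrightarrow> c (W ! j) < k"
  proof -
    fix j assume "proc W r j"
    then have "j < length W" unfolding proc_def by auto
    then have "W ! j \<in> V" using weV by auto
    then show "c (W ! j) < k" using pc unfolding proper_colouring_def by auto
  qed
  define X where "X = (\<lambda>v. int (degree V E v) + 2 * int (count_list W v) - 2 * of_bool (v = r))"
  obtain m where m1: "\<forall>j. m j < k" and m2: "\<forall>j. m j \<noteq> 0 \<longrightarrow> proc W r j \<and> j < length W - 1"
    and m3: "\<forall>j<length W - 1. proc W r j \<longrightarrow> (X (W ! j) + 2 * int (Sm W m (W ! j))) div 2 mod int k = int (c (W ! j))"
    using processing[where k=k and W=W and r=r and c=c and X=X and i="length W - 1", OF k0 Wl ne cv] by auto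
  define We where "We = expw W m"
  have wkE: "walk V E We" unfolding We_def by (rule expw_walk[OF sg wk])
  have hE: "hd We = r" and lE: "last We = r" unfolding We_def expw_hd expw_last r_def using hl by auto
  have sE: "set We = V" unfolding We_def expw_set sW ..
  have valE: "val V E We v = X v + 2 * int (Sm W m v)" for v
  proof -
    have "count_list We v = count_list W v + Sm W m v" unfolding We_def Sm_def by (rule expw_count)
    then show ?thesis unfolding val_def X_def using hE lE by auto
  qed
  have inv: "val V E We v div 2 mod int k = int (c v)" if v: "v \<in> V" "v \<noteq> r" for v
  proof -
    obtain j where j: "proc W r j" "W ! j = v" using proc_exists[of v W r] v sW W0 Wl by auto
    then have "j < length W - 1" unfolding proc_def by auto
    then show ?thesis using m3 j valE by auto
  qed
  have dr: "degree V E r \<noteq> 1" using d1 unfolding r_def .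
  obtain W' where irr': "irregularising V E W'" and lW': "walk_length W' \<le> walk_length We + 2 * D"
    using root_stage[OF sg pc wkE hE lE rV sE inv dr kD degD] by blast
  have "min_irreg_walk_length V E \<le> walk_length W'"
    unfolding min_irreg_walk_length_def using irr' by (metis (mono_tags, lifting) Least_le)
  moreover have "walk_length We \<le> walk_length W + (card V - 1) * (2 * k - 2)"
  proof -
    have s: "(\<Sum>j<length W - 1. m j) \<le> (k - 1) * card {j. j < length W - 1 \<and> proc W r j}"
      by (rule sum_bound) (use m1 m2 in auto)
    have cp: "card {j. j < length W - 1 \<and> proc W r j} \<le> card V - 1" by (rule proc_card[OF weV(1) finV rV])
    have "(k - 1) * card {j. j < length W - 1 \<and> proc W r j} \<le> (k - 1) * (card V - 1)"
      using cp by (rule mult_le_mono2)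
    then have "(\<Sum>j<length W - 1. m j) \<le> (k - 1) * (card V - 1)" using s by linarith
    moreover have "walk_length We = walk_length W + 2 * (\<Sum>j<length W - 1. m j)"
    proof -
      have "length W \<ge> 1" using weV(2) by (cases W) auto
      then show ?thesis unfolding walk_length_def We_def expw_length by linarith
    qed
    moreover have "(card V - 1) * (2 * k - 2) = 2 * ((k - 1) * (card V - 1))"
    proof -
      have "2 * k - 2 = 2 * (k - 1)" by simp
      then show ?thesis by (simp only: mult.commute mult.left_commute)
    qed
    ultimately show ?thesis by linarith
  qed
  ultimately show ?thesis using lW' unfolding k_def D_def by linarith
qed



lemma card1_eq: "finite S \<Longrightarrow> card S = 1 \<Longrightarrow> x \<in> S \<Longrightarrow> S = {x}"
  by (metis card_1_singletonE singletonD)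

theorem theorem4p5:
  fixes V :: "'a set" and E :: "'a \<Rightarrow> 'a \<Rightarrow> bool" and W :: "'a list"
  assumes "simple_graph V E"
    and "nice V E"
    and "connected_graph V E"
    and "closed_walk V E W"
    and "set W = V"
  shows "min_irreg_walk_length V E \<le> walk_length W + (card V - 1) * (2 * chromatic_number V E - 2)
                     + 2 * max_degree V E"
proof (cases "degree V E (hd W) = 1")
  case False
  then show ?thesis using main_nl[OF assms(1) assms(4) assms(5)] by blast
next
  case True
  note sg = assms(1)
  have sym: "\<And>a b. E a b \<Longrightarrow> E b a" and inV: "\<And>a b. E a b \<Longrightarrow> a \<in> V \<and> b \<in> V"
    and irr: "\<And>a. \<not> E a a" using sg unfolding simple_graph_def by blast+
  have wk: "walk V E W" and hl: "hd W = last W" using assms(4) unfolding closed_walk_def by auto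
  have weV: "set W \<subseteq> V" "W \<noteq> []" "successively E W" using wk unfolding walk_iff by auto
  define r where "r = hd W"
  have "nbrs V E r \<noteq> {}"
  proof
    assume "nbrs V E r = {}"
    then show False using True unfolding r_def nbrs_card[symmetric] by simp
  qed
  then obtain u0 where "u0 \<in> nbrs V E r" by blast
  then have ru0: "E r u0" "u0 \<in> V" unfolding nbrs_def by auto
  obtain w1 rest where Wc: "W = r # w1 # rest"
  proof (cases W)
    case Nil then show ?thesis using weV by simp
  next
    case (Cons x xs)
    then have x: "x = r" unfolding r_def by simp
    have "u0 \<in> set W" using assms(5) ru0 by auto
    moreover have "u0 \<noteq> r" using ru0 irr by auto
    ultimately have "xs \<noteq> []" using Cons x by auto
    then obtain y ys where "xs = y # ys" by (cases xs) auto
    then show ?thesis using that Cons x by simp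
  qed
  have rw1: "E r w1" using weV(3) unfolding Wc by simp
  have lr: "last (w1 # rest) = r"
  proof -
    have "last W = last (w1 # rest)" unfolding Wc by simp
    then show ?thesis using hl unfolding r_def by simp
  qed
  define W2 where "W2 = w1 # rest @ [w1]"
  have s2: "successively E W2"
  proof -
    have "successively E (w1 # rest)" using weV(3) unfolding Wc by simp
    then have "successively E ((w1 # rest) @ [w1])" unfolding successively_append_iff using lr rw1 by simp
    then show ?thesis unfolding W2_def by simp
  qed
  have set2: "set W2 = V"
  proof -
    have "r \<in> set (w1 # rest)" using lr by (metis last_in_set list.distinct(1))
    then have "set W2 = set W" unfolding W2_def Wc by auto
    then show ?thesis using assms(5) by simp
  qed
  have cw2: "closed_walk V E W2" unfolding closed_walk_def walk_iff using s2 set2 by (auto simp: W2_def)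
  have len2: "walk_length W2 = walk_length W" unfolding walk_length_def W2_def Wc by simp
  have d2: "degree V E (hd W2) \<noteq> 1"
  proof
    assume d: "degree V E (hd W2) = 1"
    have w1V: "w1 \<in> V" and rV: "r \<in> V" using inV[OF rw1] by auto
    have c1: "card (nbrs V E r) = 1" using True unfolding r_def nbrs_card .
    have c2: "card (nbrs V E w1) = 1" using d unfolding W2_def nbrs_card by simp
    have Nr: "nbrs V E r = {w1}"
      by (rule card1_eq[OF nbrs_finite[OF sg] c1]) (use rw1 w1V in \<open>simp add: nbrs_def\<close>)
    have Nw: "nbrs V E w1 = {r}"
      by (rule card1_eq[OF nbrs_finite[OF sg] c2]) (use sym[OF rw1] rV in \<open>simp add: nbrs_def\<close>)
    have reach: "E\<^sup>*\<^sup>* r v \<Longrightarrow> v \<in> {r, w1}" for v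
    proof (induction rule: rtranclp_induct)
      case base then show ?case by simp
    next
      case (step y z)
      have "z \<in> nbrs V E y" using step inV unfolding nbrs_def by auto
      then show ?case using step Nr Nw by auto
    qed
    have "V = {r, w1}"
    proof
      show "V \<subseteq> {r, w1}" using assms(3) rV reach unfolding connected_graph_def by blast
      show "{r, w1} \<subseteq> V" using rV w1V by auto
    qed
    moreover have "r \<noteq> w1" using rw1 irr by auto
    ultimately have "is_K2 V E" unfolding is_K2_def using rw1 by blast
    then show False using assms(2) unfolding nice_def by blast
  qed
  show ?thesis using main_nl[OF sg cw2 set2 d2] len2 by simp
qed

end
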